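(* Let $A$ be a ring, $\delta=(\delta_1,\ldots,\delta_n)$ an $n$-tuple of pairwise commuting derivations of $A$, $d_i\in\mathbb{N}\cup\{\infty\}$, $I=\{\alpha\in\mathbb{N}^n\mid\alpha_i\le d_i\ \forall i\}$, and let $\{x^{[\alpha]}\mid\alpha\in I\}$ be a $\delta$-descent. Then for each $\alpha\in I$, $N_\alpha=\bigoplus_{0\le\beta\le\alpha}A^\delta x^{[\beta]}=\bigoplus_{0\le\beta\le\alpha}x^{[\beta]}A^\delta$.
   Context: $A^\delta=\bigcap_i\ker\delta_i$; $N_\alpha=\bigcap_{i=1}^n\ker\delta_i^{\alpha_i+1}$; $\beta\le\alpha$ means $\beta_i\le\alpha_i$ for all $i$; $\delta^\alpha=\delta_1^{\alpha_1}\cdots\delta_n^{\alpha_n}$. A family $\{x^{[\alpha]}\mid\alpha\in I\}$ is a $\delta$-descent if $x^{[0]}=1$ and $\delta^\alpha(x^{[\beta]})=x^{[\beta-\alpha]}$ for all $\alpha\in\mathbb{N}^n$, $\beta\in I$, where $x^{[\gamma]}:=0$ for $\gamma\in\mathbb{Z}^n\setminus\mathbb{N}^n$. *)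

theory Defs
  imports Main "HOL-Library.Extended_Nat"
begin

definition derivation :: "('a::ring_1 \<Rightarrow> 'a) \<Rightarrow> bool" where
  "derivation D \<longleftrightarrow> (\<forall>a b. D (a + b) = D a + D b \<and> D (a * b) = D a * b + a * D b)"

text \<open>Multi-indices in N^n: functions nat => nat vanishing outside {..<n}
  (coordinate i of the paper corresponds to index i-1 here).\<close>
definition multiidx :: "nat \<Rightarrow> (nat \<Rightarrow> nat) set" where
  "multiidx n = {\<alpha>. \<forall>i\<ge>n. \<alpha> i = 0}"

definition idxset :: "nat \<Rightarrow> (nat \<Rightarrow> enat) \<Rightarrow> (nat \<Rightarrow> nat) set" where
  "idxset n d = {\<alpha> \<in> multiidx n. \<forall>i<n. enat (\<alpha> i) \<le> d i}"

definition dpow :: "nat \<Rightarrow> (nat \<Rightarrow> 'a \<Rightarrow> 'a) \<Rightarrow> (nat \<Rightarrow> nat) \<Rightarrow> 'a \<Rightarrow> 'a" where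
  "dpow n \<delta> \<alpha> = foldr (\<lambda>i f. (\<delta> i ^^ \<alpha> i) \<circ> f) [0..<n] id"

definition consts_of :: "nat \<Rightarrow> (nat \<Rightarrow> 'a::ring_1 \<Rightarrow> 'a) \<Rightarrow> 'a set" where
  "consts_of n \<delta> = {a. \<forall>i<n. \<delta> i a = 0}"

definition Nset :: "nat \<Rightarrow> (nat \<Rightarrow> 'a::ring_1 \<Rightarrow> 'a) \<Rightarrow> (nat \<Rightarrow> nat) \<Rightarrow> 'a set" where
  "Nset n \<delta> \<alpha> = {a. \<forall>i<n. (\<delta> i ^^ (\<alpha> i + 1)) a = 0}"

text \<open>delta-descent; x^[gamma] := 0 for gamma not in N^n, i.e. when alpha is not <= beta.\<close>
definition descent :: "nat \<Rightarrow> (nat \<Rightarrow> 'a::ring_1 \<Rightarrow> 'a) \<Rightarrow> (nat \<Rightarrow> nat) set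
    \<Rightarrow> ((nat \<Rightarrow> nat) \<Rightarrow> 'a) \<Rightarrow> bool" where
  "descent n \<delta> I x \<longleftrightarrow> x (\<lambda>_. 0) = 1 \<and>
     (\<forall>\<alpha>\<in>multiidx n. \<forall>\<beta>\<in>I.
        dpow n \<delta> \<alpha> (x \<beta>) = (if \<alpha> \<le> \<beta> then x (\<beta> - \<alpha>) else 0))"

definition is_direct_sum :: "'a::ab_group_add set \<Rightarrow> 'j set \<Rightarrow> ('j \<Rightarrow> 'a set) \<Rightarrow> bool" where
  "is_direct_sum S J M \<longleftrightarrow>
     S = {(\<Sum>j\<in>J. m j) | m. \<forall>j\<in>J. m j \<in> M j} \<and>
     (\<forall>m. (\<forall>j\<in>J. m j \<in> M j) \<and> (\<Sum>j\<in>J. m j) = 0 \<longrightarrow> (\<forall>j\<in>J. m j = 0))"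

end

theory Submission
  imports Defs
begin

definition dp :: "(nat \<Rightarrow> 'a \<Rightarrow> 'a) \<Rightarrow> nat \<Rightarrow> (nat \<Rightarrow> nat) \<Rightarrow> 'a \<Rightarrow> 'a" where
  "dp \<delta> m \<alpha> = foldr (\<lambda>i f. (\<delta> i ^^ \<alpha> i) \<circ> f) [0..<m] id"

lemma dpow_dp: "dpow n \<delta> \<alpha> = dp \<delta> n \<alpha>"
  by (simp add: dpow_def dp_def)

lemma foldr_comp_id: "foldr (\<lambda>i f. g i \<circ> f) xs h = foldr (\<lambda>i f. g i \<circ> f) xs id \<circ> h"
  by (induction xs) (simp_all add: o_assoc)

lemma dp_0[simp]: "dp \<delta> 0 \<alpha> = id"
  by (simp add: dp_def)

lemma dp_Suc: "dp \<delta> (Suc m) \<alpha> = dp \<delta> m \<alpha> \<circ> (\<delta> m ^^ \<alpha> m)"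
  unfolding dp_def by (simp add: foldr_comp_id[of _ _ "(\<delta> m ^^ \<alpha> m)"])

lemma funpow_closure:
  assumes "P id" "\<forall>f g. P f \<longrightarrow> P g \<longrightarrow> P (f \<circ> g)" "P f"
  shows "P (f ^^ k)"
proof (induction k)
  case 0 then show ?case using assms(1) by (simp only: funpow.simps(1))
next
  case (Suc k) then show ?case using assms(2,3) by (simp only: funpow.simps(2))
qed

lemma dp_closure:
  assumes "P id" "\<forall>f g. P f \<longrightarrow> P g \<longrightarrow> P (f \<circ> g)" "\<forall>i<m. P (\<delta> i)"
  shows "P (dp \<delta> m \<alpha>)"
  using assms(3)
proof (induction m)
  case 0 then show ?case using assms(1) by (simp only: dp_0)
next
  case (Suc m)
  then have "P (dp \<delta> m \<alpha>)" "P (\<delta> m ^^ \<alpha> m)" using assms(1,2) funpow_closure[of P "\<delta> m"] by auto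
  then show ?case unfolding dp_Suc using assms(2) by blast
qed

lemma dp_single:
  assumes "\<forall>j. j \<noteq> i \<longrightarrow> s j = 0"
  shows "dp \<delta> m s = (if i < m then \<delta> i ^^ s i else id)"
proof (induction m)
  case 0 then show ?case by simp
next
  case (Suc m)
  show ?case
  proof (cases "m = i")
    case True then show ?thesis unfolding dp_Suc Suc by simp
  next
    case False then show ?thesis unfolding dp_Suc Suc using assms by auto
  qed
qed

lemma dp_zero: "dp \<delta> m (\<lambda>_. 0) = id"
  by (induction m) (simp_all add: dp_Suc)

lemma funpow_comm1: "f \<circ> g = g \<circ> f \<Longrightarrow> f ^^ a \<circ> g = g \<circ> f ^^ a"
proof (induction a)
  case 0 then show ?case by simp
next
  case (Suc a)
  have "f ^^ Suc a \<circ> g = f \<circ> (f ^^ a \<circ> g)" by (simp only: funpow.simps(2) o_assoc)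
  also have "\<dots> = (f \<circ> g) \<circ> f ^^ a" using Suc by (simp only: o_assoc)
  also have "\<dots> = g \<circ> f ^^ Suc a" using Suc.prems by (simp only: o_assoc funpow.simps(2))
  finally show ?case .
qed

context
  fixes n :: nat and \<delta> :: "nat \<Rightarrow> 'a::ring_1 \<Rightarrow> 'a"
  assumes comm: "\<forall>i<n. \<forall>j<n. \<delta> i \<circ> \<delta> j = \<delta> j \<circ> \<delta> i"
begin

lemma dp_comm_pow:
  assumes "m \<le> n" "j < n"
  shows "(\<delta> j ^^ k) \<circ> dp \<delta> m \<alpha> = dp \<delta> m \<alpha> \<circ> (\<delta> j ^^ k)"
proof -
  have "\<forall>i<m. (\<delta> j ^^ k) \<circ> \<delta> i = \<delta> i \<circ> (\<delta> j ^^ k)"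
    using assms comm funpow_comm1[of "\<delta> j" "\<delta> _" k] by auto
  then show ?thesis
    by (rule dp_closure[of "\<lambda>f. (\<delta> j ^^ k) \<circ> f = f \<circ> (\<delta> j ^^ k)", rotated 2])
       (auto simp: fun_eq_iff)
qed

lemma dp_add:
  assumes "m \<le> n" "\<forall>i<m. \<nu> i = \<alpha> i + \<beta> i"
  shows "dp \<delta> m \<nu> = dp \<delta> m \<alpha> \<circ> dp \<delta> m \<beta>"
  using assms
proof (induction m)
  case 0 then show ?case by simp
next
  case (Suc m)
  then have IH: "dp \<delta> m \<nu> = dp \<delta> m \<alpha> \<circ> dp \<delta> m \<beta>" by auto
  have c: "dp \<delta> m \<beta> \<circ> (\<delta> m ^^ \<alpha> m) = (\<delta> m ^^ \<alpha> m) \<circ> dp \<delta> m \<beta>"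
    using dp_comm_pow[of m m "\<alpha> m" \<beta>] Suc.prems by auto
  have "dp \<delta> (Suc m) \<nu> = dp \<delta> m \<alpha> \<circ> (dp \<delta> m \<beta> \<circ> (\<delta> m ^^ \<alpha> m)) \<circ> (\<delta> m ^^ \<beta> m)"
    unfolding dp_Suc IH using Suc.prems by (simp add: funpow_add o_assoc)
  also have "\<dots> = dp \<delta> (Suc m) \<alpha> \<circ> dp \<delta> (Suc m) \<beta>"
    unfolding c dp_Suc by (simp add: o_assoc)
  finally show ?case .
qed

end


lemma additive_0: "\<forall>a b. (f::'a::ring_1\<Rightarrow>'a) (a + b) = f a + f b \<Longrightarrow> f 0 = 0"
proof -
  assume h: "\<forall>a b. (f::'a::ring_1\<Rightarrow>'a) (a + b) = f a + f b"
  have e: "f 0 = f 0 + f 0" using h[rule_format, of 0 0] by simp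
  then show ?thesis using add_cancel_right_right[of "f 0" "f 0"] by blast
qed

lemma additive_diff: "\<forall>a b. (f::'a::ring_1\<Rightarrow>'a) (a + b) = f a + f b \<Longrightarrow> f (a - b) = f a - f b"
proof -
  assume h: "\<forall>a b. (f::'a::ring_1\<Rightarrow>'a) (a + b) = f a + f b"
  have e: "f a = f (a - b) + f b" using h[rule_format, of "a - b" b] by simp
  then show ?thesis by (metis add_diff_cancel)
qed

lemma additive_sum: "\<forall>a b. (f::'a::ring_1\<Rightarrow>'a) (a + b) = f a + f b \<Longrightarrow> f (sum g S) = (\<Sum>j\<in>S. f (g j))"
proof (induction S rule: infinite_finite_induct)
  case (infinite A) then show ?case using additive_0[of f] by simp
next
  case empty then show ?case using additive_0[of f] by simp
next
  case (insert x F) then show ?case by simp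
qed

lemma weight_strict:
  assumes "\<beta> \<in> multiidx n" "\<nu> \<in> multiidx n" "\<beta> \<le> \<nu>" "\<beta> \<noteq> \<nu>"
  shows "(\<Sum>i<n. \<beta> i) < (\<Sum>i<n. \<nu> i)"
proof -
  obtain i where i: "\<beta> i \<noteq> \<nu> i" using assms(4) by (auto simp: fun_eq_iff)
  then have "i < n" using assms(1,2) unfolding multiidx_def by (metis (mono_tags) mem_Collect_eq leI)
  moreover have "\<beta> i < \<nu> i" using i assms(3) by (auto simp: le_fun_def order_less_le)
  ultimately show ?thesis
    by (intro sum_strict_mono_ex1) (use assms(3) in \<open>auto simp: le_fun_def\<close>)
qed

context
  fixes n :: nat and \<delta> :: "nat \<Rightarrow> 'a::ring_1 \<Rightarrow> 'a"
  assumes der: "\<forall>i<n. derivation (\<delta> i)"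
    and comm: "\<forall>i<n. \<forall>j<n. \<delta> i \<circ> \<delta> j = \<delta> j \<circ> \<delta> i"
begin

lemma dp_additive: "dp \<delta> n \<alpha> (a + b) = dp \<delta> n \<alpha> a + dp \<delta> n \<alpha> b"
proof -
  have "\<forall>a b. dp \<delta> n \<alpha> (a + b) = dp \<delta> n \<alpha> a + dp \<delta> n \<alpha> b"
    by (rule dp_closure[of "\<lambda>f. \<forall>a b. f (a + b) = f a + f b"])
       (use der in \<open>auto simp: derivation_def\<close>)
  then show ?thesis by blast
qed

lemma dp_mul:
  assumes "\<forall>i<n. \<forall>y. \<delta> i (mul c y) = mul c (\<delta> i y)"
  shows "dp \<delta> n \<alpha> (mul c y) = mul c (dp \<delta> n \<alpha> y)"
proof -
  have "\<forall>y. dp \<delta> n \<alpha> (mul c y) = mul c (dp \<delta> n \<alpha> y)"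
    by (rule dp_closure[of "\<lambda>f. \<forall>y. f (mul c y) = mul c (f y)"]) (use assms in auto)
  then show ?thesis by blast
qed

lemma dp_singleton:
  assumes "i < n"
  shows "dp \<delta> n (\<lambda>j. if j = i then k else 0) = \<delta> i ^^ k"
  using dp_single[of i "\<lambda>j. if j = i then k else 0" \<delta> n] assms by simp

lemma kill:
  assumes a: "a \<in> Nset n \<delta> \<alpha>" and \<nu>: "\<nu> \<in> multiidx n" and nle: "\<not> \<nu> \<le> \<alpha>"
  shows "dp \<delta> n \<nu> a = 0"
proof -
  obtain i where i: "\<nu> i > \<alpha> i" using nle by (auto simp: le_fun_def not_le)
  then have iN: "i < n" using \<nu> unfolding multiidx_def by (metis (mono_tags) mem_Collect_eq leI less_nat_zero_code)
  define s where "s = (\<lambda>j. if j = i then \<nu> i else 0)"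
  have "dp \<delta> n \<nu> = dp \<delta> n (\<nu>(i := 0)) \<circ> dp \<delta> n s"
    by (rule dp_add[OF comm]) (auto simp: s_def)
  moreover have "dp \<delta> n s = \<delta> i ^^ \<nu> i" unfolding s_def using dp_singleton[OF iN] .
  moreover have "\<nu> i = (\<nu> i - (\<alpha> i + 1)) + (\<alpha> i + 1)" using i by simp
  then have "(\<delta> i ^^ \<nu> i) a = (\<delta> i ^^ (\<nu> i - (\<alpha> i + 1))) ((\<delta> i ^^ (\<alpha> i + 1)) a)"
    by (metis funpow_add o_apply)
  moreover have "(\<delta> i ^^ (\<alpha> i + 1)) a = 0" using a iN by (simp add: Nset_def)
  moreover have "(\<delta> i ^^ k) 0 = 0" for k
  proof -
    have "\<forall>a b. (\<delta> i ^^ k) (a + b) = (\<delta> i ^^ k) a + (\<delta> i ^^ k) b"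
      by (rule funpow_closure[of "\<lambda>f. \<forall>a b. f (a + b) = f a + f b"])
         (use der iN in \<open>auto simp: derivation_def\<close>)
    then show ?thesis by (rule additive_0)
  qed
  moreover have "dp \<delta> n \<beta> 0 = 0" for \<beta>
    using additive_0[of "dp \<delta> n \<beta>"] dp_additive by blast
  ultimately show ?thesis by simp
qed

end


context
  fixes n :: nat and \<delta> :: "nat \<Rightarrow> 'a::ring_1 \<Rightarrow> 'a" and d :: "nat \<Rightarrow> enat"
    and x :: "(nat \<Rightarrow> nat) \<Rightarrow> 'a" and \<alpha> :: "nat \<Rightarrow> nat" and mul :: "'a \<Rightarrow> 'a \<Rightarrow> 'a"
  assumes der: "\<forall>i<n. derivation (\<delta> i)"
    and comm: "\<forall>i<n. \<forall>j<n. \<delta> i \<circ> \<delta> j = \<delta> j \<circ> \<delta> i"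
    and desc: "descent n \<delta> (idxset n d) x"
    and \<alpha>: "\<alpha> \<in> idxset n d"
    and mulc: "\<forall>c\<in>consts_of n \<delta>. \<forall>i<n. \<forall>y. \<delta> i (mul c y) = mul c (\<delta> i y)"
    and mul1: "\<forall>c. mul c 1 = c"
    and mul0: "\<forall>c. mul c 0 = 0"
    and mul0': "\<forall>y. mul 0 y = 0"
begin

lemma dpm: "c \<in> consts_of n \<delta> \<Longrightarrow> dp \<delta> n \<nu> (mul c y) = mul c (dp \<delta> n \<nu> y)"
proof -
  assume "c \<in> consts_of n \<delta>"
  then have "\<forall>i<n. \<forall>y. \<delta> i (mul c y) = mul c (\<delta> i y)" using mulc by blast
  then show ?thesis by (rule dp_mul[OF der comm])
qed

lemma dp0: "dp \<delta> n \<nu> 0 = 0"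
  using additive_0[of "dp \<delta> n \<nu>"] dp_additive[OF der comm] by blast

lemma dpdiff: "dp \<delta> n \<nu> (a - b) = dp \<delta> n \<nu> a - dp \<delta> n \<nu> b"
  using additive_diff[of "dp \<delta> n \<nu>"] dp_additive[OF der comm] by blast

lemma dpsum: "dp \<delta> n \<nu> (sum g S) = (\<Sum>j\<in>S. dp \<delta> n \<nu> (g j))"
  using additive_sum[of "dp \<delta> n \<nu>"] dp_additive[OF der comm] by blast

lemma inI: "\<gamma> \<in> multiidx n \<Longrightarrow> \<gamma> \<le> \<alpha> \<Longrightarrow> \<gamma> \<in> idxset n d"
  using \<alpha> unfolding idxset_def le_fun_def
  by (auto intro: order_trans[OF enat_ord_simps(1)[THEN iffD2]])

lemma descx: "\<gamma> \<in> multiidx n \<Longrightarrow> \<gamma> \<le> \<alpha> \<Longrightarrow> \<nu> \<in> multiidx n \<Longrightarrow>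
    dp \<delta> n \<nu> (x \<gamma>) = (if \<nu> \<le> \<gamma> then x (\<gamma> - \<nu>) else 0)"
  using desc inI unfolding descent_def dpow_dp by blast

lemma x0: "x (\<lambda>_. 0) = 1"
  using desc unfolding descent_def by blast

lemma self_minus: "(\<gamma>::nat\<Rightarrow>nat) - \<gamma> = (\<lambda>_. 0)"
  by (simp add: fun_eq_iff)

lemma max_weight:
  fixes S :: "(nat \<Rightarrow> nat) set"
  assumes "finite S" "S \<noteq> {}"
  obtains \<gamma> where "\<gamma> \<in> S" "\<forall>\<beta>\<in>S. (\<Sum>i<n. \<beta> i) \<le> (\<Sum>i<n. \<gamma> i)"
proof -
  let ?w = "\<lambda>\<beta>::nat\<Rightarrow>nat. \<Sum>i<n. \<beta> i"
  have "Max (?w ` S) \<in> ?w ` S" using assms by simp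
  then obtain \<gamma> where "\<gamma> \<in> S" "?w \<gamma> = Max (?w ` S)" by auto
  moreover have "\<forall>\<beta>\<in>S. ?w \<beta> \<le> Max (?w ` S)" using assms by simp
  ultimately show ?thesis using that by auto
qed

lemma existence:
  "finite S \<Longrightarrow> S \<subseteq> {\<beta> \<in> multiidx n. \<beta> \<le> \<alpha>} \<Longrightarrow> (\<forall>\<beta>\<in>S. \<forall>\<nu>\<in>multiidx n. \<nu> \<le> \<beta> \<longrightarrow> \<nu> \<in> S)
   \<Longrightarrow> (\<forall>\<nu>\<in>multiidx n. \<nu> \<notin> S \<longrightarrow> dp \<delta> n \<nu> a = 0)
   \<Longrightarrow> \<exists>c. (\<forall>\<beta>\<in>S. c \<beta> \<in> consts_of n \<delta>) \<and> a = (\<Sum>\<beta>\<in>S. mul (c \<beta>) (x \<beta>))"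
proof (induction "card S" arbitrary: S a rule: less_induct)
  case less
  note fin = less.prems(1) and sub = less.prems(2) and dc = less.prems(3) and kl = less.prems(4)
  have z: "(\<lambda>_. 0::nat) \<in> multiidx n" by (simp add: multiidx_def)
  show ?case
  proof (cases "S = {}")
    case True
    then have "dp \<delta> n (\<lambda>_. 0) a = 0" using kl z by blast
    then have "a = 0" by (simp add: dp_zero)
    then show ?thesis using True by simp
  next
    case False
    obtain \<gamma> where g: "\<gamma> \<in> S" and gmax: "\<forall>\<beta>\<in>S. (\<Sum>i<n. \<beta> i) \<le> (\<Sum>i<n. \<gamma> i)"
      using max_weight[OF fin False] by blast
    have gJ: "\<gamma> \<in> multiidx n" "\<gamma> \<le> \<alpha>" using g sub by auto
    define c0 where "c0 = dp \<delta> n \<gamma> a"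
    have c0c: "c0 \<in> consts_of n \<delta>"
      unfolding consts_of_def
    proof (intro CollectI allI impI)
      fix i assume iN: "i < n"
      define s where "s = (\<lambda>j. if j = i then 1 else (0::nat))"
      define \<nu> where "\<nu> = (\<lambda>j. s j + \<gamma> j)"
      have "\<delta> i = dp \<delta> n s" unfolding s_def using dp_singleton[OF der comm iN, of 1] by simp
      then have "\<delta> i c0 = (dp \<delta> n s \<circ> dp \<delta> n \<gamma>) a" by (simp add: c0_def)
      also have "\<dots> = dp \<delta> n \<nu> a" using dp_add[OF comm, of n \<nu> s \<gamma>] by (simp add: \<nu>_def)
      also have "\<dots> = 0"
      proof -
        have nm: "\<nu> \<in> multiidx n" using gJ(1) iN by (auto simp: multiidx_def \<nu>_def s_def)
        have "\<gamma> \<le> \<nu>" "\<gamma> \<noteq> \<nu>" by (auto simp: le_fun_def \<nu>_def s_def fun_eq_iff)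
        then have "(\<Sum>i<n. \<gamma> i) < (\<Sum>i<n. \<nu> i)" using weight_strict gJ(1) nm by blast
        then have "\<nu> \<notin> S" using gmax by fastforce
        then show ?thesis using kl nm by blast
      qed
      finally show "\<delta> i c0 = 0" .
    qed
    define a' where "a' = a - mul c0 (x \<gamma>)"
    define S' where "S' = S - {\<gamma>}"
    have lt: "card S' < card S" unfolding S'_def by (rule card_Diff1_less[OF fin g])
    have fin': "finite S'" "S' \<subseteq> {\<beta> \<in> multiidx n. \<beta> \<le> \<alpha>}" using fin sub by (auto simp: S'_def)
    have dc': "\<forall>\<beta>\<in>S'. \<forall>\<nu>\<in>multiidx n. \<nu> \<le> \<beta> \<longrightarrow> \<nu> \<in> S'"
    proof (intro ballI impI)
      fix \<beta> \<nu> assume b: "\<beta> \<in> S'" and nm: "\<nu> \<in> multiidx n" and le: "\<nu> \<le> \<beta>"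
      then have "\<nu> \<in> S" using dc by (auto simp: S'_def)
      moreover have "\<nu> \<noteq> \<gamma>"
      proof
        assume "\<nu> = \<gamma>"
        then have "(\<Sum>i<n. \<gamma> i) < (\<Sum>i<n. \<beta> i)"
          using weight_strict[of \<gamma> n \<beta>] le b gJ(1) sub by (auto simp: S'_def)
        then show False using gmax b by (auto simp: S'_def)
      qed
      ultimately show "\<nu> \<in> S'" by (simp add: S'_def)
    qed
    have kl': "\<forall>\<nu>\<in>multiidx n. \<nu> \<notin> S' \<longrightarrow> dp \<delta> n \<nu> a' = 0"
    proof (intro ballI impI)
      fix \<nu> assume nm: "\<nu> \<in> multiidx n" and ns: "\<nu> \<notin> S'"
      have e: "dp \<delta> n \<nu> a' = dp \<delta> n \<nu> a - mul c0 (if \<nu> \<le> \<gamma> then x (\<gamma> - \<nu>) else 0)"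
        unfolding a'_def dpdiff dpm[OF c0c] descx[OF gJ nm] ..
      show "dp \<delta> n \<nu> a' = 0"
      proof (cases "\<nu> = \<gamma>")
        case True
        then show ?thesis using e by (simp add: self_minus x0 mul1 c0_def)
      next
        case False
        then have "\<nu> \<notin> S" using ns by (simp add: S'_def)
        then have "\<not> \<nu> \<le> \<gamma>" using dc g nm by blast
        then show ?thesis using e kl nm \<open>\<nu> \<notin> S\<close> mul0 by simp
      qed
    qed
    obtain c' where c': "\<forall>\<beta>\<in>S'. c' \<beta> \<in> consts_of n \<delta>" "a' = (\<Sum>\<beta>\<in>S'. mul (c' \<beta>) (x \<beta>))"
      using less.hyps[OF lt fin' dc' kl'] by blast
    define c where "c = c'(\<gamma> := c0)"
    have "(\<Sum>\<beta>\<in>S. mul (c \<beta>) (x \<beta>)) = mul (c \<gamma>) (x \<gamma>) + (\<Sum>\<beta>\<in>S'. mul (c \<beta>) (x \<beta>))"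
      unfolding S'_def using sum.remove[OF fin g] .
    also have "(\<Sum>\<beta>\<in>S'. mul (c \<beta>) (x \<beta>)) = a'"
      unfolding c'(2) c_def S'_def by (intro sum.cong) auto
    finally have "a = (\<Sum>\<beta>\<in>S. mul (c \<beta>) (x \<beta>))" by (simp add: c_def a'_def)
    moreover have "\<forall>\<beta>\<in>S. c \<beta> \<in> consts_of n \<delta>" using c'(1) c0c by (auto simp: c_def S'_def)
    ultimately show ?thesis by blast
  qed
qed


lemma uniqueness:
  "finite S \<Longrightarrow> S \<subseteq> {\<beta> \<in> multiidx n. \<beta> \<le> \<alpha>} \<Longrightarrow> (\<forall>\<beta>\<in>S. c \<beta> \<in> consts_of n \<delta>)
   \<Longrightarrow> (\<Sum>\<beta>\<in>S. mul (c \<beta>) (x \<beta>)) = 0 \<Longrightarrow> \<forall>\<beta>\<in>S. c \<beta> = 0"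
proof (induction "card S" arbitrary: S rule: less_induct)
  case less
  note fin = less.prems(1) and sub = less.prems(2) and cc = less.prems(3) and s0 = less.prems(4)
  show ?case
  proof (cases "S = {}")
    case True then show ?thesis by simp
  next
    case False
    obtain \<gamma> where g: "\<gamma> \<in> S" and gmax: "\<forall>\<beta>\<in>S. (\<Sum>i<n. \<beta> i) \<le> (\<Sum>i<n. \<gamma> i)"
      using max_weight[OF fin False] by blast
    have gJ: "\<gamma> \<in> multiidx n" "\<gamma> \<le> \<alpha>" using g sub by auto
    define S' where "S' = S - {\<gamma>}"
    have split: "(\<Sum>\<beta>\<in>S. f \<beta>) = f \<gamma> + (\<Sum>\<beta>\<in>S'. f \<beta>)" for f :: "_ \<Rightarrow> 'a"
      unfolding S'_def using sum.remove[OF fin g] .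
    have "0 = dp \<delta> n \<gamma> (\<Sum>\<beta>\<in>S. mul (c \<beta>) (x \<beta>))" using s0 dp0 by simp
    also have "\<dots> = (\<Sum>\<beta>\<in>S. mul (c \<beta>) (dp \<delta> n \<gamma> (x \<beta>)))"
      unfolding dpsum using dpm cc by (intro sum.cong) auto
    also have "\<dots> = mul (c \<gamma>) (dp \<delta> n \<gamma> (x \<gamma>)) + (\<Sum>\<beta>\<in>S'. mul (c \<beta>) (dp \<delta> n \<gamma> (x \<beta>)))"
      by (rule split)
    also have "(\<Sum>\<beta>\<in>S'. mul (c \<beta>) (dp \<delta> n \<gamma> (x \<beta>))) = 0"
    proof (intro sum.neutral ballI)
      fix \<beta> assume b: "\<beta> \<in> S'"
      then have bJ: "\<beta> \<in> multiidx n" "\<beta> \<le> \<alpha>" "\<beta> \<in> S" "\<beta> \<noteq> \<gamma>" using sub by (auto simp: S'_def)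
      have "\<not> \<gamma> \<le> \<beta>"
      proof
        assume "\<gamma> \<le> \<beta>"
        then have "(\<Sum>i<n. \<gamma> i) < (\<Sum>i<n. \<beta> i)" using weight_strict[of \<gamma> n \<beta>] bJ gJ by auto
        then show False using gmax bJ by fastforce
      qed
      then show "mul (c \<beta>) (dp \<delta> n \<gamma> (x \<beta>)) = 0" using descx[OF bJ(1,2) gJ(1)] mul0 by simp
    qed
    also have "dp \<delta> n \<gamma> (x \<gamma>) = 1" using descx[OF gJ gJ(1)] by (simp add: self_minus x0)
    finally have cg: "c \<gamma> = 0" using mul1 by simp
    have z': "(\<Sum>\<beta>\<in>S'. mul (c \<beta>) (x \<beta>)) = 0" using s0 split[of "\<lambda>\<beta>. mul (c \<beta>) (x \<beta>)"] cg mul0' by simp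
    have lt: "card S' < card S" unfolding S'_def by (rule card_Diff1_less[OF fin g])
    have p: "finite S'" "S' \<subseteq> {\<beta> \<in> multiidx n. \<beta> \<le> \<alpha>}" "\<forall>\<beta>\<in>S'. c \<beta> \<in> consts_of n \<delta>"
      using fin sub cc by (auto simp: S'_def)
    have "\<forall>\<beta>\<in>S'. c \<beta> = 0" by (rule less.hyps[OF lt p z'])
    then show ?thesis using cg by (auto simp: S'_def)
  qed
qed

lemma finJ: "finite {\<beta> \<in> multiidx n. \<beta> \<le> \<alpha>}"
proof (rule finite_subset)
  show "{\<beta> \<in> multiidx n. \<beta> \<le> \<alpha>} \<subseteq> {f. \<forall>i. (i \<in> {..<n} \<longrightarrow> f i \<in> (\<Union>j<n. {..\<alpha> j})) \<and> (i \<notin> {..<n} \<longrightarrow> f i = 0)}"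
    by (auto simp: multiidx_def le_fun_def)
  show "finite {f. \<forall>i. (i \<in> {..<n} \<longrightarrow> f i \<in> (\<Union>j<n. {..\<alpha> j})) \<and> (i \<notin> {..<n} \<longrightarrow> f i = (0::nat))}"
    by (rule finite_set_of_finite_funs) auto
qed

lemma generic:
  "is_direct_sum (Nset n \<delta> \<alpha>) {\<beta> \<in> multiidx n. \<beta> \<le> \<alpha>} (\<lambda>\<beta>. (\<lambda>c. mul c (x \<beta>)) ` consts_of n \<delta>)"
  unfolding is_direct_sum_def
proof (intro conjI allI impI)
  let ?J = "{\<beta> \<in> multiidx n. \<beta> \<le> \<alpha>}"
  show "Nset n \<delta> \<alpha> = {\<Sum>j\<in>?J. m j |m. \<forall>j\<in>?J. m j \<in> (\<lambda>c. mul c (x j)) ` consts_of n \<delta>}"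
  proof (intro set_eqI iffI)
    fix a assume a: "a \<in> Nset n \<delta> \<alpha>"
    have k: "\<forall>\<nu>\<in>multiidx n. \<nu> \<notin> ?J \<longrightarrow> dp \<delta> n \<nu> a = 0"
    proof (intro ballI impI)
      fix \<nu> assume "\<nu> \<in> multiidx n" "\<nu> \<notin> ?J"
      then show "dp \<delta> n \<nu> a = 0" using kill[OF der comm a, of \<nu>] by simp
    qed
    have dc: "\<forall>\<beta>\<in>?J. \<forall>\<nu>\<in>multiidx n. \<nu> \<le> \<beta> \<longrightarrow> \<nu> \<in> ?J"
      by (auto intro: order_trans)
    obtain c where c: "\<forall>\<beta>\<in>?J. c \<beta> \<in> consts_of n \<delta>" "a = (\<Sum>\<beta>\<in>?J. mul (c \<beta>) (x \<beta>))"
      using existence[OF finJ order_refl dc k] by blast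
    have hP: "\<forall>j\<in>?J. (\<lambda>\<beta>. mul (c \<beta>) (x \<beta>)) j \<in> (\<lambda>c. mul c (x j)) ` consts_of n \<delta>"
      using c(1) by auto
    show "a \<in> {\<Sum>j\<in>?J. m j |m. \<forall>j\<in>?J. m j \<in> (\<lambda>c. mul c (x j)) ` consts_of n \<delta>}"
      unfolding mem_Collect_eq by (rule exI[of _ "\<lambda>\<beta>. mul (c \<beta>) (x \<beta>)"]) (use c(2) hP in simp)
  next
    fix a assume "a \<in> {\<Sum>j\<in>?J. m j |m. \<forall>j\<in>?J. m j \<in> (\<lambda>c. mul c (x j)) ` consts_of n \<delta>}"
    then obtain m where m: "\<forall>j\<in>?J. m j \<in> (\<lambda>c. mul c (x j)) ` consts_of n \<delta>" and am: "a = (\<Sum>j\<in>?J. m j)"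
      by blast
    show "a \<in> Nset n \<delta> \<alpha>" unfolding Nset_def
    proof (intro CollectI allI impI)
      fix i assume iN: "i < n"
      define s where "s = (\<lambda>j. if j = i then \<alpha> i + 1 else 0)"
      have e: "\<delta> i ^^ (\<alpha> i + 1) = dp \<delta> n s" unfolding s_def using dp_singleton[OF der comm iN] by simp
      have sm: "s \<in> multiidx n" using iN by (auto simp: s_def multiidx_def)
      have "dp \<delta> n s a = (\<Sum>j\<in>?J. dp \<delta> n s (m j))" unfolding am dpsum ..
      also have "\<dots> = 0"
      proof (intro sum.neutral ballI)
        fix j assume j: "j \<in> ?J"
        then obtain c where c: "c \<in> consts_of n \<delta>" "m j = mul c (x j)" using m by blast
        have "\<not> s \<le> j"
        proof
          assume "s \<le> j"
          then have "s i \<le> j i" by (simp add: le_fun_def)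
          moreover have "j i \<le> \<alpha> i" using j by (simp add: le_fun_def)
          ultimately show False by (simp add: s_def)
        qed
        then show "dp \<delta> n s (m j) = 0" using c dpm descx[of j s] j sm mul0 by simp
      qed
      finally show "(\<delta> i ^^ (\<alpha> i + 1)) a = 0" using e by simp
    qed
  qed
next
  fix m
  let ?J = "{\<beta> \<in> multiidx n. \<beta> \<le> \<alpha>}"
  assume h: "(\<forall>j\<in>?J. m j \<in> (\<lambda>c. mul c (x j)) ` consts_of n \<delta>) \<and> (\<Sum>j\<in>?J. m j) = 0"
  then have "\<forall>j\<in>?J. \<exists>c. c \<in> consts_of n \<delta> \<and> m j = mul c (x j)" by blast
  then obtain c where c: "\<forall>j\<in>?J. c j \<in> consts_of n \<delta> \<and> m j = mul (c j) (x j)" by metis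
  have "(\<Sum>j\<in>?J. mul (c j) (x j)) = 0" using h c by (metis (no_types, lifting) sum.cong)
  then have "\<forall>j\<in>?J. c j = 0" using uniqueness[OF finJ order_refl] c by blast
  then show "\<forall>j\<in>?J. m j = 0" using c mul0' by simp
qed
end

theorem lemma2p1:
  fixes n :: nat and \<delta> :: "nat \<Rightarrow> 'a::ring_1 \<Rightarrow> 'a" and d :: "nat \<Rightarrow> enat"
    and x :: "(nat \<Rightarrow> nat) \<Rightarrow> 'a"
  assumes der: "\<forall>i<n. derivation (\<delta> i)"
    and comm: "\<forall>i<n. \<forall>j<n. \<delta> i \<circ> \<delta> j = \<delta> j \<circ> \<delta> i"
    and desc: "descent n \<delta> (idxset n d) x"
    and \<alpha>: "\<alpha> \<in> idxset n d"
  shows "is_direct_sum (Nset n \<delta> \<alpha>) {\<beta> \<in> multiidx n. \<beta> \<le> \<alpha>}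
           (\<lambda>\<beta>. (\<lambda>c. c * x \<beta>) ` consts_of n \<delta>)
       \<and> is_direct_sum (Nset n \<delta> \<alpha>) {\<beta> \<in> multiidx n. \<beta> \<le> \<alpha>}
           (\<lambda>\<beta>. (\<lambda>c. x \<beta> * c) ` consts_of n \<delta>)"
proof
  have l: "\<forall>c\<in>consts_of n \<delta>. \<forall>i<n. \<forall>y. \<delta> i (c * y) = c * \<delta> i y"
    using der by (auto simp: consts_of_def derivation_def)
  have r: "\<forall>c\<in>consts_of n \<delta>. \<forall>i<n. \<forall>y. \<delta> i (y * c) = \<delta> i y * c"
    using der by (auto simp: consts_of_def derivation_def)
  show "is_direct_sum (Nset n \<delta> \<alpha>) {\<beta> \<in> multiidx n. \<beta> \<le> \<alpha>}
           (\<lambda>\<beta>. (\<lambda>c. c * x \<beta>) ` consts_of n \<delta>)"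
    using generic[OF der comm desc \<alpha>, where mul = "\<lambda>c y. c * y"] l by simp
  show "is_direct_sum (Nset n \<delta> \<alpha>) {\<beta> \<in> multiidx n. \<beta> \<le> \<alpha>}
           (\<lambda>\<beta>. (\<lambda>c. x \<beta> * c) ` consts_of n \<delta>)"
    using generic[OF der comm desc \<alpha>, where mul = "\<lambda>c y. y * c"] r by simp
qed

end
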